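(* For every $n\geq1$, $$\sum_{\sigma\in\mathfrak S_n}(xy)^{{\rm M}(\sigma)}\Bigl(\frac{x+y}{2}\Bigr)^{n-2{\rm M}(\sigma)-1}\alpha^{{\rm LRmin}(\sigma)-1}\beta^{{\rm RLmin}(\sigma)-1}=\sum_{\sigma\in\mathfrak S_n}x^{{\rm des}(\sigma)}y^{n-{\rm des}(\sigma)-1}\Bigl(\frac{\alpha+\beta}{2}\Bigr)^{{\rm LRmin}(\sigma)+{\rm RLmin}(\sigma)-2}.$$
   Context: For $\sigma=\sigma_1\cdots\sigma_n\in\mathfrak S_n$: ${\rm des}(\sigma)$ is the number of $i\in[n-1]$ with $\sigma_i>\sigma_{i+1}$; ${\rm M}(\sigma)$ is the number of $i$ with $1<i<n$ and $\sigma_{i-1}<\sigma_i>\sigma_{i+1}$; ${\rm LRmin}(\sigma)$ is the number of $i$ with $\sigma_j>\sigma_i$ for all $j<i$; ${\rm RLmin}(\sigma)$ is the number of $i$ with $\sigma_j>\sigma_i$ for all $j>i$. Here $x,y,\alpha,\beta$ are indeterminates. *)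

theory Defs
  imports "HOL-Combinatorics.Permutations"
begin

text \<open>A permutation sigma of [n] is a function with sigma permutes {1..n};
  sigma i is the entry at position i (one-line notation sigma_1 ... sigma_n).\<close>

definition des :: "nat \<Rightarrow> (nat \<Rightarrow> nat) \<Rightarrow> nat" where
  "des n \<sigma> = card {i \<in> {1..n-1}. \<sigma> i > \<sigma> (i+1)}"

definition peaks :: "nat \<Rightarrow> (nat \<Rightarrow> nat) \<Rightarrow> nat" where
  "peaks n \<sigma> = card {i. 1 < i \<and> i < n \<and> \<sigma> (i-1) < \<sigma> i \<and> \<sigma> i > \<sigma> (i+1)}"

definition LRmin :: "nat \<Rightarrow> (nat \<Rightarrow> nat) \<Rightarrow> nat" where
  "LRmin n \<sigma> = card {i \<in> {1..n}. \<forall>j \<in> {1..<i}. \<sigma> j > \<sigma> i}"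

definition RLmin :: "nat \<Rightarrow> (nat \<Rightarrow> nat) \<Rightarrow> nat" where
  "RLmin n \<sigma> = card {i \<in> {1..n}. \<forall>j \<in> {i<..n}. \<sigma> j > \<sigma> i}"

end

theory Submission
  imports Defs "HOL-Computational_Algebra.Polynomial"
begin

lemma card3:
  "card ({a, Suc a, Suc (Suc a)} \<inter> {i. R i}) =
    (if R a then 1 else 0) + (if R (Suc a) then 1 else 0) + (if R (Suc (Suc a)) then 1 else 0)"
  by (cases "R a"; cases "R (Suc a)"; cases "R (Suc (Suc a))") auto

lemma card2:
  "card ({a, Suc a} \<inter> {i. R i}) = (if R a then 1 else 0) + (if R (Suc a) then 1 else 0)"
  by (cases "R a"; cases "R (Suc a)") auto

lemma card_shift:
  fixes P Q :: "nat \<Rightarrow> bool"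
  assumes "j \<le> N"
    and lo: "\<And>i. 1 \<le> i \<Longrightarrow> i < j \<Longrightarrow> Q i = P i"
    and hi: "\<And>i. Suc (Suc j) < i \<Longrightarrow> i \<le> Suc N \<Longrightarrow> Q i = P (i-1)"
  shows "card {i\<in>{1..Suc N}. Q i} + (if 1\<le>j \<and> P j then 1 else 0) + (if Suc j \<le> N \<and> P (Suc j) then 1 else 0)
      = card {i\<in>{1..N}. P i} + (if 1 \<le> j \<and> Q j then 1 else 0) + (if Q (Suc j) then 1 else 0)
        + (if Suc (Suc j) \<le> Suc N \<and> Q (Suc (Suc j)) then 1 else 0)"
proof -
  define A where "A = {i\<in>{1..Suc N}. Q i}"
  define B where "B = {i\<in>{1..N}. P i}"
  define A2 where "A2 = {j, Suc j, Suc (Suc j)} \<inter> {i. 1 \<le> i \<and> i \<le> Suc N \<and> Q i}"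
  define B2 where "B2 = {j, Suc j} \<inter> {i. 1 \<le> i \<and> i \<le> N \<and> P i}"
  define f where "f = (\<lambda>i::nat. if i < j then i else i - 1)"
  have fA: "finite A" "finite A2" "A2 \<subseteq> A" unfolding A_def A2_def by auto
  have fB: "finite B" "finite B2" "B2 \<subseteq> B" unfolding B_def B2_def by auto
  have inj: "inj_on f (A - A2)"
    unfolding inj_on_def f_def A_def A2_def by auto
  have img: "f ` (A - A2) = B - B2"
  proof
    show "f ` (A - A2) \<subseteq> B - B2"
    proof
      fix z assume "z \<in> f ` (A - A2)"
      then obtain i where i: "i \<in> A - A2" "z = f i" by auto
      show "z \<in> B - B2"
      proof (cases "i < j")
        case True thus ?thesis using i lo assms(1) unfolding A_def A2_def B_def B2_def f_def by auto
      next
        case False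
        then have "Suc (Suc j) < i" using i unfolding A_def A2_def by auto
        thus ?thesis using i hi[of i] assms(1) unfolding A_def A2_def B_def B2_def f_def by auto
      qed
    qed
  next
    show "B - B2 \<subseteq> f ` (A - A2)"
    proof
      fix z assume z: "z \<in> B - B2"
      show "z \<in> f ` (A - A2)"
      proof (cases "z < j")
        case True
        then have "z \<in> A - A2" "f z = z" using z lo assms(1) unfolding A_def A2_def B_def B2_def f_def by auto
        thus ?thesis by force
      next
        case False
        then have "Suc j < z" using z unfolding B_def B2_def by auto
        then have "Suc z \<in> A - A2" "f (Suc z) = z" using z hi[of "Suc z"] assms(1) unfolding A_def A2_def B_def B2_def f_def by auto
        thus ?thesis by force
      qed
    qed
  qed
  have "card (A - A2) = card (B - B2)" using bij_betw_same_card[of f] inj img by (simp add: bij_betw_def)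
  then have e: "card A - card A2 = card B - card B2" using fA fB by (simp add: card_Diff_subset)
  have cA: "card A2 \<le> card A" "card B2 \<le> card B" using fA fB by (auto intro: card_mono)
  have cA2: "card A2 = (if 1 \<le> j \<and> Q j then 1 else 0) + (if Q (Suc j) then 1 else 0)
        + (if Suc (Suc j) \<le> Suc N \<and> Q (Suc (Suc j)) then 1 else 0)"
    unfolding A2_def card3 using assms(1) by auto
  have cB2: "card B2 = (if 1\<le>j \<and> P j then 1 else 0) + (if Suc j \<le> N \<and> P (Suc j) then 1 else 0)"
    unfolding B2_def card2 using assms(1) by auto
  show ?thesis using e cA cA2 cB2 unfolding A_def B_def by linarith
qed

definition ins :: "nat \<Rightarrow> (nat\<Rightarrow>nat) \<Rightarrow> nat \<Rightarrow> nat \<Rightarrow> nat" where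
  "ins n \<sigma> j i = (if i \<le> j then \<sigma> i else if i = Suc j then Suc n else if i \<le> Suc n then \<sigma> (i-1) else i)"

lemma perm_range: "(\<sigma>::nat\<Rightarrow>nat) permutes {1..n} \<Longrightarrow> 1 \<le> i \<Longrightarrow> i \<le> n \<Longrightarrow> 1 \<le> \<sigma> i \<and> \<sigma> i \<le> n"
  using permutes_in_image[of \<sigma> "{1..n}" i] by auto

lemma perm_out: "(\<sigma>::nat\<Rightarrow>nat) permutes {1..n} \<Longrightarrow> i \<notin> {1..n} \<Longrightarrow> \<sigma> i = i"
  using permutes_not_in[of \<sigma> "{1..n}" i] by auto

lemma perm_zero: "(\<sigma>::nat\<Rightarrow>nat) permutes {1..n} \<Longrightarrow> \<sigma> 0 = 0"
  proof -
  assume p: "\<sigma> permutes {1..n}"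
  have "(0::nat) \<notin> {1..n}" by simp
  then show ?thesis using perm_out[OF p] by blast
qed

lemma ins_val_lt:
  assumes p: "\<sigma> permutes {1..n}" and j: "j \<le> n" and i: "i \<le> Suc n" "i \<noteq> Suc j"
  shows "ins n \<sigma> j i \<le> n"
  using perm_range[OF p, of i] perm_range[OF p, of "i-1"] perm_zero[OF p] i j
  unfolding ins_def by (cases "i = 0") auto

lemma ins_top:
  assumes p: "\<sigma> permutes {1..n}" and j: "j \<le> n" and i: "i \<le> Suc n"
  shows "ins n \<sigma> j i = Suc n \<longleftrightarrow> i = Suc j"
proof
  assume "ins n \<sigma> j i = Suc n"
  then show "i = Suc j" using ins_val_lt[OF p j i] by (cases "i = Suc j") auto
qed (simp add: ins_def)

lemma ins_val_ge:
  assumes p: "\<sigma> permutes {1..n}" and j: "j \<le> n" and i: "1 \<le> i" "i \<le> Suc n"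
  shows "1 \<le> ins n \<sigma> j i"
  using perm_range[OF p, of i] perm_range[OF p, of "i-1"] i j
  unfolding ins_def by auto

lemma ins_permutes:
  assumes p: "\<sigma> permutes {1..n}" and j: "j \<le> n"
  shows "ins n \<sigma> j permutes {1..Suc n}"
proof (rule bij_imp_permutes)
  have injs: "inj \<sigma>" using p permutes_inj by auto
  have inj: "inj_on (ins n \<sigma> j) {1..Suc n}"
  proof (rule inj_onI)
    fix a b assume a: "a \<in> {1..Suc n}" and b: "b \<in> {1..Suc n}" and e: "ins n \<sigma> j a = ins n \<sigma> j b"
    show "a = b"
    proof (cases "a = Suc j \<or> b = Suc j")
      case True
      then show ?thesis using ins_top[OF p j, of a] ins_top[OF p j, of b] a b e
        by auto
    next
      case False
      have va: "ins n \<sigma> j c = \<sigma> (if c \<le> j then c else c - 1)" if "c \<le> Suc n" "c \<noteq> Suc j" for c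
        using that by (simp add: ins_def)
      have "\<sigma> (if a \<le> j then a else a - 1) = \<sigma> (if b \<le> j then b else b - 1)"
        using va[of a] va[of b] a b e False by simp
      then have "(if a \<le> j then a else a - 1) = (if b \<le> j then b else b - 1)"
        using injs by (simp add: inj_def)
      then show ?thesis using False a b by (simp split: if_splits)
    qed
  qed
  have sub: "ins n \<sigma> j ` {1..Suc n} \<subseteq> {1..Suc n}"
    using ins_val_ge[OF p j] ins_val_lt[OF p j] by (force simp: ins_def)
  show "bij_betw (ins n \<sigma> j) {1..Suc n} {1..Suc n}"
    using endo_inj_surj[OF _ sub inj] inj by (auto simp: bij_betw_def)
    fix x assume "x \<notin> {1..Suc n}"
    then show "ins n \<sigma> j x = x" using perm_zero[OF p] j by (cases "x = 0") (auto simp: ins_def)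
qed

lemma ins_inj:
  assumes p: "\<sigma> permutes {1..n}" "\<sigma>' permutes {1..n}" and j: "j \<le> n" "j' \<le> n"
    and e: "ins n \<sigma> j = ins n \<sigma>' j'"
  shows "\<sigma> = \<sigma>' \<and> j = j'"
proof -
  have "ins n \<sigma> j (Suc j) = Suc n" by (simp add: ins_def)
  then have "ins n \<sigma>' j' (Suc j) = Suc n" using e by simp
  then have jj: "j = j'" using ins_val_lt[OF p(2) j(2), of "Suc j"] j by (cases "Suc j = Suc j'") auto
  have "\<sigma> i = \<sigma>' i" for i
  proof -
    consider "i \<le> j" | "j < i" "i \<le> n" | "n < i" by linarith
    then show ?thesis
    proof cases
      case 1 then show ?thesis using fun_cong[OF e, of i] jj by (simp add: ins_def)
    next
      case 2 then show ?thesis using fun_cong[OF e, of "Suc i"] jj by (simp add: ins_def)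
    next
      case 3 then show ?thesis using perm_out[OF p(1), of i] perm_out[OF p(2), of i] by auto
    qed
  qed
  then show ?thesis using jj by auto
qed

lemma ins_lo: "i \<le> j \<Longrightarrow> ins n \<sigma> j i = \<sigma> i" by (simp add: ins_def)
lemma ins_mid: "ins n \<sigma> j (Suc j) = Suc n" by (simp add: ins_def)
lemma ins_hi: "Suc j < i \<Longrightarrow> i \<le> Suc n \<Longrightarrow> ins n \<sigma> j i = \<sigma> (i - 1)" by (simp add: ins_def)

lemma lr_low:
  assumes "i \<le> j"
  shows "(\<forall>k\<in>{1..<i}. ins n \<sigma> j k > ins n \<sigma> j i) \<longleftrightarrow> (\<forall>k\<in>{1..<i}. \<sigma> k > \<sigma> i)"
  using assms by (simp add: ins_lo)

lemma lr_high:
  assumes p: "\<sigma> permutes {1..n}" and "Suc j < i" "i \<le> Suc n"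
  shows "(\<forall>k\<in>{1..<i}. ins n \<sigma> j k > ins n \<sigma> j i) \<longleftrightarrow> (\<forall>k\<in>{1..<i-1}. \<sigma> k > \<sigma> (i-1))"
proof
  assume Q: "\<forall>k\<in>{1..<i}. ins n \<sigma> j k > ins n \<sigma> j i"
  show "\<forall>k\<in>{1..<i-1}. \<sigma> k > \<sigma> (i-1)"
  proof
    fix k assume k: "k \<in> {1..<i-1}"
    show "\<sigma> k > \<sigma> (i-1)"
    proof (cases "k \<le> j")
      case True
      then show ?thesis using Q[rule_format, of k] k assms by (simp add: ins_lo ins_hi)
    next
      case False
      then show ?thesis using Q[rule_format, of "Suc k"] k assms by (simp add: ins_lo ins_hi)
    qed
  qed
next
  assume P: "\<forall>k\<in>{1..<i-1}. \<sigma> k > \<sigma> (i-1)"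
  show "\<forall>k\<in>{1..<i}. ins n \<sigma> j k > ins n \<sigma> j i"
  proof
    fix k assume k: "k \<in> {1..<i}"
    consider "k \<le> j" | "k = Suc j" | "Suc j < k" by linarith
    then show "ins n \<sigma> j k > ins n \<sigma> j i"
    proof cases
      case 1 then show ?thesis using P[rule_format, of k] k assms by (simp add: ins_lo ins_hi)
    next
      case 2
      have "1 \<le> i - 1" "i - 1 \<le> n" using assms by auto
      then show ?thesis using 2 perm_range[OF p, of "i-1"] assms by (simp add: ins_mid ins_hi)
    next
      case 3
      have "k - 1 \<in> {1..<i-1}" "k \<le> Suc n" using 3 k assms by auto
      then show ?thesis using P 3 assms by (simp add: ins_hi)
    qed
  qed
qed

lemma lr_mid:
  assumes p: "\<sigma> permutes {1..n}" and j: "j \<le> n"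
  shows "(\<forall>k\<in>{1..<Suc j}. ins n \<sigma> j k > ins n \<sigma> j (Suc j)) \<longleftrightarrow> j = 0"
proof (cases "j = 0")
  case False
  then have "ins n \<sigma> j j \<le> n" using perm_range[OF p, of j] j by (simp add: ins_lo)
  then show ?thesis using False by (auto simp: ins_mid intro!: bexI[of _ j])
qed simp

lemma LRmin_ins:
  assumes p: "\<sigma> permutes {1..n}" and j: "j \<le> n"
  shows "LRmin (Suc n) (ins n \<sigma> j) = LRmin n \<sigma> + (if j = 0 then 1 else 0)"
proof -
  define P where "P i = (\<forall>k\<in>{1..<i}. \<sigma> k > \<sigma> i)" for i
  define Q where "Q i = (\<forall>k\<in>{1..<i}. ins n \<sigma> j k > ins n \<sigma> j i)" for i
  have c: "card {i\<in>{1..Suc n}. Q i} + (if 1\<le>j \<and> P j then 1 else 0) + (if Suc j \<le> n \<and> P (Suc j) then 1 else 0)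
      = card {i\<in>{1..n}. P i} + (if 1 \<le> j \<and> Q j then 1 else 0) + (if Q (Suc j) then 1 else 0)
        + (if Suc (Suc j) \<le> Suc n \<and> Q (Suc (Suc j)) then 1 else 0)"
  proof (rule card_shift[OF j])
    fix i assume "1 \<le> i" "i < j" then show "Q i = P i" unfolding P_def Q_def by (intro lr_low) simp
  next
    fix i assume "Suc (Suc j) < i" "i \<le> Suc n" then show "Q i = P (i-1)" unfolding P_def Q_def by (intro lr_high[OF p]) auto
  qed
  have "Q j = P j" unfolding P_def Q_def by (rule lr_low) simp
  moreover have "Q (Suc j) = (j = 0)" unfolding Q_def using lr_mid[OF p j] by simp
  moreover have "Suc (Suc j) \<le> Suc n \<Longrightarrow> Q (Suc (Suc j)) = P (Suc j)"
    unfolding P_def Q_def using lr_high[OF p, of j "Suc (Suc j)"] by simp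
  ultimately show ?thesis using c unfolding LRmin_def P_def[symmetric] Q_def[symmetric]
    by (auto split: if_splits)
qed

lemma rl_low:
  assumes p: "\<sigma> permutes {1..n}" and "1 \<le> i" "i \<le> j" "j \<le> n"
  shows "(\<forall>k\<in>{i<..Suc n}. ins n \<sigma> j k > ins n \<sigma> j i) \<longleftrightarrow> (\<forall>k\<in>{i<..n}. \<sigma> k > \<sigma> i)"
proof
  assume Q: "\<forall>k\<in>{i<..Suc n}. ins n \<sigma> j k > ins n \<sigma> j i"
  show "\<forall>k\<in>{i<..n}. \<sigma> k > \<sigma> i"
  proof
    fix k assume k: "k \<in> {i<..n}"
    show "\<sigma> k > \<sigma> i"
    proof (cases "k \<le> j")
      case True
      then show ?thesis using Q[rule_format, of k] k assms by (simp add: ins_lo)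
    next
      case False
      then show ?thesis using Q[rule_format, of "Suc k"] k assms by (simp add: ins_lo ins_hi)
    qed
  qed
next
  assume P: "\<forall>k\<in>{i<..n}. \<sigma> k > \<sigma> i"
  show "\<forall>k\<in>{i<..Suc n}. ins n \<sigma> j k > ins n \<sigma> j i"
  proof
    fix k assume k: "k \<in> {i<..Suc n}"
    consider "k \<le> j" | "k = Suc j" | "Suc j < k" by linarith
    then show "ins n \<sigma> j k > ins n \<sigma> j i"
    proof cases
      case 1 then show ?thesis using P[rule_format, of k] k assms by (simp add: ins_lo)
    next
      case 2
      then show ?thesis using perm_range[OF p, of i] assms by (simp add: ins_mid ins_lo)
    next
      case 3
      have "k - 1 \<in> {i<..n}" "k \<le> Suc n" using 3 k assms by auto
      then show ?thesis using P 3 assms by (simp add: ins_hi ins_lo)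
    qed
  qed
qed

lemma rl_high:
  assumes "Suc j < i" "i \<le> Suc n"
  shows "(\<forall>k\<in>{i<..Suc n}. ins n \<sigma> j k > ins n \<sigma> j i) \<longleftrightarrow> (\<forall>k\<in>{i-1<..n}. \<sigma> k > \<sigma> (i-1))"
proof
  assume Q: "\<forall>k\<in>{i<..Suc n}. ins n \<sigma> j k > ins n \<sigma> j i"
  show "\<forall>k\<in>{i-1<..n}. \<sigma> k > \<sigma> (i-1)"
  proof
    fix k assume k: "k \<in> {i-1<..n}"
    have kk: "Suc k \<in> {i<..Suc n}" using k assms by auto
    show "\<sigma> k > \<sigma> (i-1)" using Q[rule_format, OF kk] kk assms by (simp add: ins_hi)
  qed
next
  assume P: "\<forall>k\<in>{i-1<..n}. \<sigma> k > \<sigma> (i-1)"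
  show "\<forall>k\<in>{i<..Suc n}. ins n \<sigma> j k > ins n \<sigma> j i"
  proof
    fix k assume k: "k \<in> {i<..Suc n}"
    have "k - 1 \<in> {i-1<..n}" using k assms by auto
    then show "ins n \<sigma> j k > ins n \<sigma> j i" using P k assms by (simp add: ins_hi)
  qed
qed

lemma rl_mid:
  assumes p: "\<sigma> permutes {1..n}" and j: "j \<le> n"
  shows "(\<forall>k\<in>{Suc j<..Suc n}. ins n \<sigma> j k > ins n \<sigma> j (Suc j)) \<longleftrightarrow> j = n"
proof (cases "j = n")
  case False
  then have "Suc (Suc j) \<in> {Suc j<..Suc n}" using j by auto
  moreover have "ins n \<sigma> j (Suc (Suc j)) \<le> n" using perm_range[OF p, of "Suc j"] j False by (simp add: ins_hi)
  ultimately show ?thesis using False by (auto simp: ins_mid intro!: bexI[of _ "Suc (Suc j)"])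
qed simp

lemma RLmin_ins:
  assumes p: "\<sigma> permutes {1..n}" and j: "j \<le> n"
  shows "RLmin (Suc n) (ins n \<sigma> j) = RLmin n \<sigma> + (if j = n then 1 else 0)"
proof -
  define P where "P i = (\<forall>k\<in>{i<..n}. \<sigma> k > \<sigma> i)" for i
  define Q where "Q i = (\<forall>k\<in>{i<..Suc n}. ins n \<sigma> j k > ins n \<sigma> j i)" for i
  have c: "card {i\<in>{1..Suc n}. Q i} + (if 1\<le>j \<and> P j then 1 else 0) + (if Suc j \<le> n \<and> P (Suc j) then 1 else 0)
      = card {i\<in>{1..n}. P i} + (if 1 \<le> j \<and> Q j then 1 else 0) + (if Q (Suc j) then 1 else 0)
        + (if Suc (Suc j) \<le> Suc n \<and> Q (Suc (Suc j)) then 1 else 0)"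
  proof (rule card_shift[OF j])
    fix i assume "1 \<le> i" "i < j" then show "Q i = P i" unfolding P_def Q_def using j by (intro rl_low[OF p]) auto
  next
    fix i assume "Suc (Suc j) < i" "i \<le> Suc n" then show "Q i = P (i-1)" unfolding P_def Q_def by (intro rl_high) auto
  qed
  have "1 \<le> j \<Longrightarrow> Q j = P j" unfolding P_def Q_def using j by (intro rl_low[OF p]) auto
  moreover have "Q (Suc j) = (j = n)" unfolding Q_def using rl_mid[OF p j] by simp
  moreover have "Suc (Suc j) \<le> Suc n \<Longrightarrow> Q (Suc (Suc j)) = P (Suc j)"
    unfolding P_def Q_def using rl_high[of j "Suc (Suc j)"] by simp
  ultimately show ?thesis using c unfolding RLmin_def P_def[symmetric] Q_def[symmetric]
    by (auto split: if_splits)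
qed

lemma des_alt: "des n \<sigma> = card {i\<in>{1..n-1}. \<sigma> (Suc i) < \<sigma> i}"
  unfolding des_def by simp

lemma des_ins:
  assumes p: "\<sigma> permutes {1..n}" and j: "j \<le> n" and n: "1 \<le> n"
  shows "des (Suc n) (ins n \<sigma> j) = (if j = n then des n \<sigma> else if 1 \<le> j \<and> \<sigma> (Suc j) < \<sigma> j then des n \<sigma> else des n \<sigma> + 1)"
proof (cases "j = n")
  case True
  have "{i\<in>{1..n}. ins n \<sigma> j (Suc i) < ins n \<sigma> j i} = {i\<in>{1..n-1}. \<sigma> (Suc i) < \<sigma> i}"
  proof (rule set_eqI)
    fix i
    show "i \<in> {i\<in>{1..n}. ins n \<sigma> j (Suc i) < ins n \<sigma> j i} \<longleftrightarrow> i \<in> {i\<in>{1..n-1}. \<sigma> (Suc i) < \<sigma> i}"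
      using True perm_range[OF p, of i] by (cases "i = n") (auto simp: ins_lo ins_mid)
  qed
  then show ?thesis using True unfolding des_alt by simp
next
  case False
  define N where "N = n - 1"
  have N: "Suc N = n" "j \<le> N" using n j False unfolding N_def by auto
  define P where "P i = (\<sigma> (Suc i) < \<sigma> i)" for i
  define Q where "Q i = (ins n \<sigma> j (Suc i) < ins n \<sigma> j i)" for i
  have c: "card {i\<in>{1..Suc N}. Q i} + (if 1\<le>j \<and> P j then 1 else 0) + (if Suc j \<le> N \<and> P (Suc j) then 1 else 0)
      = card {i\<in>{1..N}. P i} + (if 1 \<le> j \<and> Q j then 1 else 0) + (if Q (Suc j) then 1 else 0)
        + (if Suc (Suc j) \<le> Suc N \<and> Q (Suc (Suc j)) then 1 else 0)"
  proof (rule card_shift[OF N(2)])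
    fix i assume "1 \<le> i" "i < j" then show "Q i = P i" unfolding P_def Q_def by (simp add: ins_lo)
  next
    fix i assume "Suc (Suc j) < i" "i \<le> Suc N" then show "Q i = P (i-1)" unfolding P_def Q_def using N by (simp add: ins_hi)
  qed
  have "1 \<le> j \<Longrightarrow> \<not> Q j" unfolding Q_def using perm_range[OF p, of j] j by (simp add: ins_lo ins_mid)
  moreover have "Q (Suc j)" unfolding Q_def using perm_range[OF p, of "Suc j"] N by (simp add: ins_hi ins_mid)
  moreover have "Suc (Suc j) \<le> Suc N \<Longrightarrow> Q (Suc (Suc j)) = P (Suc j)"
    unfolding P_def Q_def using N by (simp add: ins_hi)
  ultimately show ?thesis using c N False unfolding des_alt P_def[symmetric] Q_def[symmetric]
    by (auto split: if_splits)
qed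

definition isPk :: "nat \<Rightarrow> (nat \<Rightarrow> nat) \<Rightarrow> nat \<Rightarrow> bool" where
  "isPk n \<sigma> i = (1 < i \<and> i < n \<and> \<sigma> (i-1) < \<sigma> i \<and> \<sigma> (Suc i) < \<sigma> i)"

lemma peaks_alt: "peaks n \<sigma> = card {i\<in>{1..n}. isPk n \<sigma> i}"
  unfolding peaks_def isPk_def by (rule arg_cong[where f=card]) auto

lemma peaks_ins:
  assumes p: "\<sigma> permutes {1..n}" and j: "j \<le> n"
  shows "peaks (Suc n) (ins n \<sigma> j) + (if isPk n \<sigma> j then 1 else 0) + (if isPk n \<sigma> (Suc j) then 1 else 0)
    = peaks n \<sigma> + (if 1 \<le> j \<and> j < n then 1 else 0)"
proof -
  define P where "P i = isPk n \<sigma> i" for i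
  define Q where "Q i = isPk (Suc n) (ins n \<sigma> j) i" for i
  have c: "card {i\<in>{1..Suc n}. Q i} + (if 1\<le>j \<and> P j then 1 else 0) + (if Suc j \<le> n \<and> P (Suc j) then 1 else 0)
      = card {i\<in>{1..n}. P i} + (if 1 \<le> j \<and> Q j then 1 else 0) + (if Q (Suc j) then 1 else 0)
        + (if Suc (Suc j) \<le> Suc n \<and> Q (Suc (Suc j)) then 1 else 0)"
  proof (rule card_shift[OF j])
    fix i assume "1 \<le> i" "i < j" then show "Q i = P i" unfolding P_def Q_def isPk_def using j by (simp add: ins_lo)
  next
    fix i assume i: "Suc (Suc j) < i" "i \<le> Suc n"
    show "Q i = P (i-1)"
    proof (cases "i = Suc n")
      case True then show ?thesis unfolding P_def Q_def isPk_def by simp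
    next
      case False
      have e: "i - 1 - 1 = i - 2" "Suc (i - 1) = i" using i by auto
      have a: "Suc 0 < i - Suc 0" "i - Suc 0 < n" "1 < i - 1" "i - 1 < n" using i False by auto
      show ?thesis unfolding P_def Q_def isPk_def using i False
        by (simp add: ins_hi e a del: One_nat_def)
    qed
  qed
  have "1 \<le> j \<Longrightarrow> \<not> Q j" unfolding Q_def isPk_def using perm_range[OF p, of j] j by (simp add: ins_lo ins_mid)
  moreover have "Q (Suc j) = (1 \<le> j \<and> j < n)" unfolding Q_def isPk_def
    using perm_range[OF p, of "Suc j"] perm_range[OF p, of j] j by (auto simp: ins_hi ins_mid ins_lo)
  moreover have "Suc (Suc j) \<le> Suc n \<Longrightarrow> \<not> Q (Suc (Suc j))"
    unfolding Q_def isPk_def using perm_range[OF p, of "Suc j"] by (simp add: ins_hi ins_mid)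
  moreover have "\<not> P 0" "\<not> Suc 0 \<le> j \<Longrightarrow> \<not> P j" "\<not> P n" "Suc j > n \<Longrightarrow> \<not> P (Suc j)" unfolding P_def isPk_def by auto
  ultimately show ?thesis using c j unfolding peaks_alt P_def[symmetric] Q_def[symmetric]
    by (auto split: if_splits)
qed

lemma sum_ins:
  fixes f :: "(nat\<Rightarrow>nat) \<Rightarrow> 'a::comm_monoid_add"
  shows "(\<Sum>\<tau>\<in>{\<tau>. \<tau> permutes {1..Suc n}}. f \<tau>) = (\<Sum>\<sigma>\<in>{\<sigma>. \<sigma> permutes {1..n}}. \<Sum>j\<in>{0..n}. f (ins n \<sigma> j))"
proof -
  define S where "S = {\<sigma>::nat\<Rightarrow>nat. \<sigma> permutes {1..n}}"
  define T where "T = {\<sigma>::nat\<Rightarrow>nat. \<sigma> permutes {1..Suc n}}"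
  define g where "g = (\<lambda>(\<sigma>,j). ins n \<sigma> j)"
  have inj: "inj_on g (S \<times> {0..n})"
  proof (rule inj_onI)
    fix a b assume a: "a \<in> S \<times> {0..n}" and b: "b \<in> S \<times> {0..n}" and e: "g a = g b"
    obtain \<sigma> j where aa: "a = (\<sigma>, j)" by (cases a)
    obtain \<sigma>' j' where bb: "b = (\<sigma>', j')" by (cases b)
    show "a = b" using ins_inj[of \<sigma> n \<sigma>' j j'] a b e unfolding aa bb g_def S_def by simp
  qed
  have sub: "g ` (S \<times> {0..n}) \<subseteq> T"
  proof
    fix t assume "t \<in> g ` (S \<times> {0..n})"
    then obtain \<sigma> j where "\<sigma> \<in> S" "j \<in> {0..n}" "t = ins n \<sigma> j" unfolding g_def by auto
    then show "t \<in> T" unfolding S_def T_def using ins_permutes by simp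
  qed
  have fS: "finite S" "finite T" unfolding S_def T_def by (auto intro: finite_permutations)
  have "card S = fact n" unfolding S_def by (rule card_permutations) auto
  moreover have "card T = fact (Suc n)" unfolding T_def by (rule card_permutations) auto
  ultimately have "card (g ` (S \<times> {0..n})) = card T"
    using card_image[OF inj] by (simp add: card_cartesian_product algebra_simps)
  then have img: "g ` (S \<times> {0..n}) = T" using card_subset_eq[OF fS(2) sub] by simp
  have "(\<Sum>\<tau>\<in>T. f \<tau>) = (\<Sum>x\<in>S \<times> {0..n}. f (g x))"
    using sum.reindex[OF inj, of f] img by simp
  also have "\<dots> = (\<Sum>\<sigma>\<in>S. \<Sum>j\<in>{0..n}. f (ins n \<sigma> j))"
    unfolding g_def sum.cartesian_product by (rule sum.cong) auto
  finally show ?thesis unfolding S_def T_def .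
qed

lemma LRmin_pos: assumes "1 \<le> n" shows "1 \<le> LRmin n \<sigma>"
proof -
  have "{1} \<subseteq> {i\<in>{1..n}. \<forall>j\<in>{1..<i}. \<sigma> j > \<sigma> i}" using assms by auto
  from card_mono[OF _ this] show ?thesis unfolding LRmin_def by simp
qed

lemma RLmin_pos: assumes "1 \<le> n" shows "1 \<le> RLmin n \<sigma>"
proof -
  have "{n} \<subseteq> {i\<in>{1..n}. \<forall>j\<in>{i<..n}. \<sigma> j > \<sigma> i}" using assms by auto
  from card_mono[OF _ this] show ?thesis unfolding RLmin_def by simp
qed

lemma des_le: "des n \<sigma> \<le> n - 1"
proof -
  have "des n \<sigma> \<le> card {1..n-1}" unfolding des_def by (rule card_mono) auto
  then show ?thesis by simp
qed

lemma pk_slots: "card {j\<in>{1..n-1}. isPk n \<sigma> j \<or> isPk n \<sigma> (Suc j)} = 2 * peaks n \<sigma>"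
proof -
  define K where "K = {i\<in>{1..n}. isPk n \<sigma> i}"
  have eq: "{j\<in>{1..n-1}. isPk n \<sigma> j \<or> isPk n \<sigma> (Suc j)} = K \<union> (\<lambda>i. i - 1) ` K"
  proof (rule set_eqI)
    fix j
    show "j \<in> {j\<in>{1..n-1}. isPk n \<sigma> j \<or> isPk n \<sigma> (Suc j)} \<longleftrightarrow> j \<in> K \<union> (\<lambda>i. i - 1) ` K"
    proof
      assume j: "j \<in> {j\<in>{1..n-1}. isPk n \<sigma> j \<or> isPk n \<sigma> (Suc j)}"
      show "j \<in> K \<union> (\<lambda>i. i - 1) ` K"
      proof (cases "isPk n \<sigma> j")
        case True then show ?thesis using j unfolding K_def by auto
      next
        case False
        then have "Suc j \<in> K" using j unfolding K_def by auto
        moreover have "j = Suc j - 1" by simp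
        ultimately show ?thesis by blast
      qed
    next
      assume "j \<in> K \<union> (\<lambda>i. i - 1) ` K"
      then consider "j \<in> K" | i where "i \<in> K" "j = i - 1" by blast
      then show "j \<in> {j\<in>{1..n-1}. isPk n \<sigma> j \<or> isPk n \<sigma> (Suc j)}"
      proof cases
        case 1 then have "1 < j" "j < n" "isPk n \<sigma> j" unfolding K_def isPk_def by auto
        then show ?thesis by simp
      next
        case 2
        then have "Suc j = i" unfolding K_def isPk_def by auto
        moreover have "1 \<le> j" "j \<le> n - 1" "isPk n \<sigma> i" using 2 unfolding K_def isPk_def by auto
        ultimately show ?thesis by auto
      qed
    qed
  qed
  have fin: "finite K" unfolding K_def by auto
  have disj: "K \<inter> (\<lambda>i. i - 1) ` K = {}"
  proof (rule ccontr)
    assume "K \<inter> (\<lambda>i. i - 1) ` K \<noteq> {}"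
    then obtain i where i: "i \<in> K" "i - 1 \<in> K" by blast
    then have e: "Suc (i - 1) = i" unfolding K_def isPk_def by auto
    have "\<sigma> (Suc (i-1)) < \<sigma> (i-1)" using i(2) unfolding K_def isPk_def by blast
    moreover have "\<sigma> (i-1) < \<sigma> i" using i(1) unfolding K_def isPk_def by blast
    ultimately show False using e by simp
  qed
  have inj: "inj_on (\<lambda>i. i - 1) K" unfolding K_def isPk_def inj_on_def by auto
  have "card (K \<union> (\<lambda>i. i - 1) ` K) = card K + card K"
    using card_Un_disjoint[OF fin finite_imageI[OF fin] disj] card_image[OF inj] by simp
  then show ?thesis unfolding eq peaks_alt K_def by simp
qed

lemma pk_le: "2 * peaks n \<sigma> \<le> n - 1"
proof -
  have "card {j\<in>{1..n-1}. isPk n \<sigma> j \<or> isPk n \<sigma> (Suc j)} \<le> card {1..n-1}" by (rule card_mono) auto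
  then show ?thesis using pk_slots[of n \<sigma>] by simp
qed

definition wL :: "nat \<Rightarrow> 'a::field_char_0 \<Rightarrow> 'a \<Rightarrow> 'a \<Rightarrow> 'a \<Rightarrow> (nat \<Rightarrow> nat) \<Rightarrow> 'a" where
  "wL n x y a b \<sigma> = (x*y) ^ peaks n \<sigma> * ((x+y)/2) ^ (n - 2 * peaks n \<sigma> - 1)
            * a ^ (LRmin n \<sigma> - 1) * b ^ (RLmin n \<sigma> - 1)"

definition wR :: "nat \<Rightarrow> 'a::field_char_0 \<Rightarrow> 'a \<Rightarrow> 'a \<Rightarrow> 'a \<Rightarrow> (nat \<Rightarrow> nat) \<Rightarrow> 'a" where
  "wR n x y a b \<sigma> = x ^ des n \<sigma> * y ^ (n - des n \<sigma> - 1)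
            * ((a+b)/2) ^ (LRmin n \<sigma> + RLmin n \<sigma> - 2)"

definition DL :: "nat \<Rightarrow> 'a::field_char_0 \<Rightarrow> 'a \<Rightarrow> 'a \<Rightarrow> 'a \<Rightarrow> (nat \<Rightarrow> nat) \<Rightarrow> 'a" where
  "DL n x y a b \<sigma> = ((x*y) ^ peaks n \<sigma> * (of_nat (n - 2 * peaks n \<sigma> - 1) * ((x+y)/2) ^ (n - 2 * peaks n \<sigma> - 1 - 1))
      + of_nat (peaks n \<sigma>) * (x*y) ^ (peaks n \<sigma> - 1) * (x+y) * ((x+y)/2) ^ (n - 2 * peaks n \<sigma> - 1))
      * (a ^ (LRmin n \<sigma> - 1) * b ^ (RLmin n \<sigma> - 1))"

definition DR :: "nat \<Rightarrow> 'a::field_char_0 \<Rightarrow> 'a \<Rightarrow> 'a \<Rightarrow> 'a \<Rightarrow> (nat \<Rightarrow> nat) \<Rightarrow> 'a" where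
  "DR n x y a b \<sigma> = (x ^ des n \<sigma> * (of_nat (n - des n \<sigma> - 1) * y ^ (n - des n \<sigma> - 1 - 1))
      + of_nat (des n \<sigma>) * x ^ (des n \<sigma> - 1) * y ^ (n - des n \<sigma> - 1))
      * ((a+b)/2) ^ (LRmin n \<sigma> + RLmin n \<sigma> - 2)"

lemma coeff_mult_1: "coeff (p * q) 1 = coeff p 0 * coeff q 1 + coeff p 1 * coeff q 0"
  by (simp add: coeff_mult)

lemma coeff_mult_S0: "coeff (p * q) (Suc 0) = coeff p 0 * coeff q (Suc 0) + coeff p (Suc 0) * coeff q 0"
  by (simp add: coeff_mult)

lemma coeff_power_1: "coeff (p ^ k) 1 = of_nat k * coeff p 0 ^ (k - 1) * coeff p 1"
proof (induction k)
  case (Suc k)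
  have "coeff (p ^ Suc k) 1 = coeff p 0 * coeff (p ^ k) 1 + coeff p 1 * coeff p 0 ^ k"
    by (simp only: power_Suc coeff_mult_1 coeff_0_power)
  also have "\<dots> = of_nat (Suc k) * coeff p 0 ^ (Suc k - 1) * coeff p 1"
    using Suc.IH by (cases k) (simp_all add: algebra_simps)
  finally show ?case .
qed simp

lemma coeffL: "coeff ([:P0, P1, 1:] ^ k * [:U, 1:] ^ m) 1 =
   P0 ^ k * (of_nat m * U ^ (m - 1)) + of_nat k * P0 ^ (k - 1) * P1 * U ^ m"
  by (simp only: coeff_mult_1 coeff_power_1 coeff_0_power) simp

lemma coeffR: "coeff ([:X, 1:] ^ d * [:Y, 1:] ^ e) 1 =
   X ^ d * (of_nat e * Y ^ (e - 1)) + of_nat d * X ^ (d - 1) * Y ^ e"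
  by (simp only: coeff_mult_1 coeff_power_1 coeff_0_power) simp

lemma deriv_eq:
  fixes x y a b :: "'a::field_char_0"
  assumes IH: "\<forall>x y. (\<Sum>\<sigma>\<in>{\<sigma>. \<sigma> permutes {1..n}}. wL n x y a b \<sigma>) = (\<Sum>\<sigma>\<in>{\<sigma>. \<sigma> permutes {1..n}}. wR n x y a b \<sigma>)"
  shows "(\<Sum>\<sigma>\<in>{\<sigma>. \<sigma> permutes {1..n}}. DL n x y a b \<sigma>) = (\<Sum>\<sigma>\<in>{\<sigma>. \<sigma> permutes {1..n}}. DR n x y a b \<sigma>)"
proof -
  define S where "S = {\<sigma>::nat\<Rightarrow>nat. \<sigma> permutes {1..n}}"
  define PL where "PL = (\<Sum>\<sigma>\<in>S. smult (a ^ (LRmin n \<sigma> - 1) * b ^ (RLmin n \<sigma> - 1))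
     ([:x*y, x+y, 1:] ^ peaks n \<sigma> * [:(x+y)/2, 1:] ^ (n - 2 * peaks n \<sigma> - 1)))"
  define PR where "PR = (\<Sum>\<sigma>\<in>S. smult (((a+b)/2) ^ (LRmin n \<sigma> + RLmin n \<sigma> - 2))
     ([:x, 1:] ^ des n \<sigma> * [:y, 1:] ^ (n - des n \<sigma> - 1)))"
  have "poly PL t = poly PR t" for t
  proof -
    have q1: "poly [:x*y, x+y, 1:] t = (x+t)*(y+t)" by (simp add: algebra_simps)
    have q2: "poly [:(x+y)/2, 1:] t = ((x+t)+(y+t))/2" by (simp add: field_simps)
    have q3: "poly [:x, 1:] t = x + t" "poly [:y, 1:] t = y + t" by simp_all
    have "poly PL t = (\<Sum>\<sigma>\<in>S. wL n (x+t) (y+t) a b \<sigma>)"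
      unfolding PL_def wL_def poly_sum poly_smult poly_mult poly_power q1 q2 by (rule sum.cong) (simp_all add: ac_simps)
    moreover have "poly PR t = (\<Sum>\<sigma>\<in>S. wR n (x+t) (y+t) a b \<sigma>)"
      unfolding PR_def wR_def poly_sum poly_smult poly_mult poly_power q3 by (rule sum.cong) (simp_all add: ac_simps)
    ultimately show ?thesis using IH unfolding S_def by simp
  qed
  then have "PL = PR" using poly_eq_poly_eq_iff by blast
  then have "coeff PL 1 = coeff PR 1" by simp
  moreover have "coeff PL 1 = (\<Sum>\<sigma>\<in>S. DL n x y a b \<sigma>)"
    unfolding PL_def coeff_sum coeff_smult coeffL DL_def by (rule sum.cong) (simp_all add: mult.commute)
  moreover have "coeff PR 1 = (\<Sum>\<sigma>\<in>S. DR n x y a b \<sigma>)"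
    unfolding PR_def coeff_sum coeff_smult coeffR DR_def by (rule sum.cong) (simp_all add: mult.commute)
  ultimately show ?thesis unfolding S_def by simp
qed

lemma sum_if_card:
  fixes X Y :: "'a::comm_semiring_1"
  assumes "finite A"
  shows "(\<Sum>j\<in>A. if C j then X else Y) = of_nat (card {j\<in>A. C j}) * X + of_nat (card A - card {j\<in>A. C j}) * Y"
proof -
  have "(\<Sum>j\<in>A. if C j then X else Y) = (\<Sum>j\<in>A \<inter> {j. C j}. X) + (\<Sum>j\<in>A \<inter> -{j. C j}. Y)"
    by (rule sum.If_cases[OF assms])
  moreover have "A \<inter> {j. C j} = {j\<in>A. C j}" by auto
  moreover have "A \<inter> -{j. C j} = A - {j\<in>A. C j}" by auto
  moreover have "card (A - {j\<in>A. C j}) = card A - card {j\<in>A. C j}"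
    using assms by (intro card_Diff_subset) auto
  ultimately show ?thesis by simp
qed

lemma sum_ends:
  fixes n :: nat
  assumes "1 \<le> n"
  shows "(\<Sum>j\<in>{0..n}. f j) = f 0 + f n + (\<Sum>j\<in>{1..n-1}. f j)"
proof -
  have "{0..n} = insert 0 (insert n {1..n-1})" using assms by auto
  moreover have "0 \<notin> insert n {1..n-1}" "n \<notin> {1..n-1}" using assms by auto
  ultimately show ?thesis by (simp add: add.assoc)
qed

lemma no_adj: "\<not> (isPk n \<sigma> j \<and> isPk n \<sigma> (Suc j))"
  unfolding isPk_def by auto

lemma sumL:
  fixes x y a b :: "'a::field_char_0"
  assumes p: "\<sigma> permutes {1..n}" and n: "1 \<le> n"
  shows "(\<Sum>j\<in>{0..n}. wL (Suc n) x y a b (ins n \<sigma> j)) = (a+b)*((x+y)/2) * wL n x y a b \<sigma> + x*y * DL n x y a b \<sigma>"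
proof -
  define k where "k = peaks n \<sigma>"
  define m where "m = n - 2*k - 1"
  define AB where "AB = a^(LRmin n \<sigma> - 1) * b^(RLmin n \<sigma> - 1)"
  define u where "u = (x+y)/(2::'a)"
  define W where "W = wL n x y a b \<sigma>"
  have W: "W = (x*y)^k * u^m * AB" unfolding W_def wL_def k_def m_def AB_def u_def by (simp add: mult.assoc)
  have hk: "2*k \<le> n-1" unfolding k_def by (rule pk_le)
  have l1: "1 \<le> LRmin n \<sigma>" "1 \<le> RLmin n \<sigma>" using LRmin_pos RLmin_pos n by auto
  have n0: "n \<noteq> 0" using n by simp
  have ex: "Suc n - 2*k - 1 = Suc m" using hk n unfolding m_def by simp
  have j0: "wL (Suc n) x y a b (ins n \<sigma> 0) = a * u * W"
  proof -
    have pk: "peaks (Suc n) (ins n \<sigma> 0) = k" using peaks_ins[OF p, of 0] unfolding k_def by (simp add: isPk_def)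
    have lr: "LRmin (Suc n) (ins n \<sigma> 0) - 1 = Suc (LRmin n \<sigma> - 1)" using LRmin_ins[OF p, of 0] l1 by simp
    have rl: "RLmin (Suc n) (ins n \<sigma> 0) = RLmin n \<sigma>" using RLmin_ins[OF p, of 0] n0 by simp
    show ?thesis unfolding wL_def pk ex lr rl W AB_def u_def by (simp add: algebra_simps)
  qed
  have jn: "wL (Suc n) x y a b (ins n \<sigma> n) = b * u * W"
  proof -
    have pk: "peaks (Suc n) (ins n \<sigma> n) = k" using peaks_ins[OF p, of n] unfolding k_def by (simp add: isPk_def)
    have lr: "LRmin (Suc n) (ins n \<sigma> n) = LRmin n \<sigma>" using LRmin_ins[OF p, of n] n0 by simp
    have rl: "RLmin (Suc n) (ins n \<sigma> n) - 1 = Suc (RLmin n \<sigma> - 1)" using RLmin_ins[OF p, of n] l1 by simp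
    show ?thesis unfolding wL_def pk ex lr rl W AB_def u_def by (simp add: algebra_simps)
  qed
  have jm: "wL (Suc n) x y a b (ins n \<sigma> j) =
      (if isPk n \<sigma> j \<or> isPk n \<sigma> (Suc j) then u * W else (x*y)^(Suc k) * u^(m-1) * AB)"
    if j: "j \<in> {1..n-1}" for j
  proof -
    have jj: "j \<le> n" "j \<noteq> 0" "j \<noteq> n" using j by auto
    have lr: "LRmin (Suc n) (ins n \<sigma> j) = LRmin n \<sigma>" using LRmin_ins[OF p jj(1)] jj by simp
    have rl: "RLmin (Suc n) (ins n \<sigma> j) = RLmin n \<sigma>" using RLmin_ins[OF p jj(1)] jj by simp
    have pke: "peaks (Suc n) (ins n \<sigma> j) + (if isPk n \<sigma> j then 1 else 0) + (if isPk n \<sigma> (Suc j) then 1 else 0) = k + 1"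
      using peaks_ins[OF p jj(1)] j unfolding k_def by auto
    show ?thesis
    proof (cases "isPk n \<sigma> j \<or> isPk n \<sigma> (Suc j)")
      case True
      then have pk: "peaks (Suc n) (ins n \<sigma> j) = k" using pke no_adj[of n \<sigma> j] by auto
      show ?thesis using True unfolding wL_def pk ex lr rl W AB_def u_def by (simp add: algebra_simps)
    next
      case False
      then have pk: "peaks (Suc n) (ins n \<sigma> j) = Suc k" using pke by auto
      have ex2: "Suc n - 2 * Suc k - 1 = m - 1" unfolding m_def by simp
      show ?thesis using False unfolding wL_def pk ex2 lr rl W AB_def u_def by (simp add: algebra_simps)
    qed
  qed
  have cardm: "card {1..n-1} - 2*k = m" unfolding m_def by simp
  have mid: "(\<Sum>j\<in>{1..n-1}. wL (Suc n) x y a b (ins n \<sigma> j)) = of_nat (2*k) * (u*W) + of_nat m * ((x*y)^(Suc k) * u^(m-1) * AB)"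
  proof -
    have "(\<Sum>j\<in>{1..n-1}. wL (Suc n) x y a b (ins n \<sigma> j)) =
        (\<Sum>j\<in>{1..n-1}. if isPk n \<sigma> j \<or> isPk n \<sigma> (Suc j) then u * W else (x*y)^(Suc k) * u^(m-1) * AB)"
      by (rule sum.cong) (simp_all add: jm)
    also have "\<dots> = of_nat (2*k) * (u*W) + of_nat m * ((x*y)^(Suc k) * u^(m-1) * AB)"
      unfolding sum_if_card[OF finite_atLeastAtMost] pk_slots k_def[symmetric] cardm ..
    finally show ?thesis .
  qed
  have DLe: "DL n x y a b \<sigma> = ((x*y)^k * (of_nat m * u^(m-1)) + of_nat k * (x*y)^(k-1) * (x+y) * u^m) * AB"
    unfolding DL_def k_def m_def u_def AB_def by simp
  have key1: "x*y * (of_nat k * (x*y)^(k-1) * (x+y)) = of_nat (2*k) * u * (x*y)^k"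
    unfolding u_def by (cases k) (simp_all add: field_simps)
  have "x*y * DL n x y a b \<sigma> = x*y*(x*y)^k * (of_nat m * u^(m-1)) * AB + (x*y * (of_nat k * (x*y)^(k-1) * (x+y))) * u^m * AB"
    unfolding DLe by (simp add: algebra_simps)
  also have "\<dots> = of_nat m * ((x*y)^(Suc k) * u^(m-1) * AB) + of_nat (2*k) * (u*W)"
    unfolding key1 W by (simp add: algebra_simps)
  finally have DLx: "x*y * DL n x y a b \<sigma> = of_nat m * ((x*y)^(Suc k) * u^(m-1) * AB) + of_nat (2*k) * (u*W)" .
  show ?thesis
    unfolding sum_ends[OF n] j0 jn mid DLx W_def[symmetric] u_def[symmetric] by (simp add: algebra_simps)
qed

lemma sumR:
  fixes x y a b :: "'a::field_char_0"
  assumes p: "\<sigma> permutes {1..n}" and n: "1 \<le> n"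
  shows "(\<Sum>j\<in>{0..n}. wR (Suc n) x y a b (ins n \<sigma> j)) = ((a+b)/2)*(x+y) * wR n x y a b \<sigma> + x*y * DR n x y a b \<sigma>"
proof -
  define d where "d = des n \<sigma>"
  define e where "e = n - d - 1"
  define c where "c = (a+b)/(2::'a)"
  define C where "C = c^(LRmin n \<sigma> + RLmin n \<sigma> - 2)"
  define W where "W = wR n x y a b \<sigma>"
  have W: "W = x^d * y^e * C" unfolding W_def wR_def d_def e_def C_def c_def by simp
  have hd: "d \<le> n-1" unfolding d_def by (rule des_le)
  have l1: "1 \<le> LRmin n \<sigma>" "1 \<le> RLmin n \<sigma>" using LRmin_pos RLmin_pos n by auto
  have n0: "n \<noteq> 0" using n by simp
  have j0: "wR (Suc n) x y a b (ins n \<sigma> 0) = c * x * W"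
  proof -
    have ds: "des (Suc n) (ins n \<sigma> 0) = Suc d" using des_ins[OF p _ n, of 0] n0 unfolding d_def by simp
    have ex: "Suc n - Suc d - 1 = e" unfolding e_def by simp
    have lr: "LRmin (Suc n) (ins n \<sigma> 0) + RLmin (Suc n) (ins n \<sigma> 0) - 2 = Suc (LRmin n \<sigma> + RLmin n \<sigma> - 2)"
      using LRmin_ins[OF p, of 0] RLmin_ins[OF p, of 0] l1 n0 by simp
    show ?thesis unfolding wR_def ds ex lr W C_def c_def by (simp add: algebra_simps)
  qed
  have jn: "wR (Suc n) x y a b (ins n \<sigma> n) = c * y * W"
  proof -
    have ds: "des (Suc n) (ins n \<sigma> n) = d" using des_ins[OF p _ n, of n] unfolding d_def by simp
    have ex: "Suc n - d - 1 = Suc e" using hd n unfolding e_def by simp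
    have lr: "LRmin (Suc n) (ins n \<sigma> n) + RLmin (Suc n) (ins n \<sigma> n) - 2 = Suc (LRmin n \<sigma> + RLmin n \<sigma> - 2)"
      using LRmin_ins[OF p, of n] RLmin_ins[OF p, of n] l1 n0 by simp
    show ?thesis unfolding wR_def ds ex lr W C_def c_def by (simp add: algebra_simps)
  qed
  have jm: "wR (Suc n) x y a b (ins n \<sigma> j) =
      (if \<sigma> (Suc j) < \<sigma> j then x^d * y^(Suc e) * C else x^(Suc d) * y^e * C)"
    if j: "j \<in> {1..n-1}" for j
  proof -
    have jj: "j \<le> n" "j \<noteq> 0" "j \<noteq> n" using j by auto
    have lr: "LRmin (Suc n) (ins n \<sigma> j) + RLmin (Suc n) (ins n \<sigma> j) - 2 = LRmin n \<sigma> + RLmin n \<sigma> - 2"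
      using LRmin_ins[OF p jj(1)] RLmin_ins[OF p jj(1)] jj by simp
    show ?thesis
    proof (cases "\<sigma> (Suc j) < \<sigma> j")
      case True
      then have ds: "des (Suc n) (ins n \<sigma> j) = d" using des_ins[OF p jj(1) n] jj unfolding d_def by simp
      have ex: "Suc n - d - 1 = Suc e" using hd n unfolding e_def by simp
      show ?thesis using True unfolding wR_def ds ex lr C_def c_def by simp
    next
      case False
      then have ds: "des (Suc n) (ins n \<sigma> j) = Suc d" using des_ins[OF p jj(1) n] jj unfolding d_def by simp
      have ex: "Suc n - Suc d - 1 = e" unfolding e_def by simp
      show ?thesis using False unfolding wR_def ds ex lr C_def c_def by simp
    qed
  qed
  have cardm: "card {1..n-1} - d = e" unfolding e_def by simp
  have mid: "(\<Sum>j\<in>{1..n-1}. wR (Suc n) x y a b (ins n \<sigma> j)) = of_nat d * (x^d * y^(Suc e) * C) + of_nat e * (x^(Suc d) * y^e * C)"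
  proof -
    have "(\<Sum>j\<in>{1..n-1}. wR (Suc n) x y a b (ins n \<sigma> j)) =
        (\<Sum>j\<in>{1..n-1}. if \<sigma> (Suc j) < \<sigma> j then x^d * y^(Suc e) * C else x^(Suc d) * y^e * C)"
      by (rule sum.cong) (simp_all add: jm)
    also have "\<dots> = of_nat d * (x^d * y^(Suc e) * C) + of_nat e * (x^(Suc d) * y^e * C)"
      unfolding sum_if_card[OF finite_atLeastAtMost] des_alt[symmetric] d_def[symmetric] cardm ..
    finally show ?thesis .
  qed
  have DRe: "DR n x y a b \<sigma> = (x^d * (of_nat e * y^(e-1)) + of_nat d * x^(d-1) * y^e) * C"
    unfolding DR_def d_def e_def C_def c_def by simp
  have kA: "x * (of_nat d * x^(d-1)) = of_nat d * x^d" by (cases d) simp_all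
  have kB: "y * (of_nat e * y^(e-1)) = of_nat e * y^e" by (cases e) simp_all
  have "x*y * DR n x y a b \<sigma> = (x * x^d) * (y * (of_nat e * y^(e-1))) * C + (x * (of_nat d * x^(d-1))) * (y * y^e) * C"
    unfolding DRe by (simp add: algebra_simps)
  also have "\<dots> = of_nat d * (x^d * y^(Suc e) * C) + of_nat e * (x^(Suc d) * y^e * C)"
    unfolding kA kB by (simp add: algebra_simps)
  finally have DRx: "x*y * DR n x y a b \<sigma> = of_nat d * (x^d * y^(Suc e) * C) + of_nat e * (x^(Suc d) * y^e * C)" .
  show ?thesis
    unfolding sum_ends[OF n] j0 jn mid DRx W_def[symmetric] c_def by (simp add: field_simps)
qed

lemma main:
  assumes "1 \<le> n"
  shows "\<forall>x y a b :: 'a::field_char_0. (\<Sum>\<sigma>\<in>{\<sigma>. \<sigma> permutes {1..n}}. wL n x y a b \<sigma>) = (\<Sum>\<sigma>\<in>{\<sigma>. \<sigma> permutes {1..n}}. wR n x y a b \<sigma>)"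
  using assms
proof (induction n rule: nat_induct_at_least)
  case base
  have "{\<sigma>::nat\<Rightarrow>nat. \<sigma> permutes {1..1}} = {id}" by simp
  moreover have "{i\<in>{1..1::nat}. \<forall>j\<in>{1..<i}. id j > id i} = {1}" by auto
  moreover have "{i\<in>{1..1::nat}. \<forall>j\<in>{i<..1}. id j > id i} = {1}" by auto
  ultimately have "{\<sigma>::nat\<Rightarrow>nat. \<sigma> permutes {1..1}} = {id}" "peaks 1 id = 0" "des 1 id = 0" "LRmin 1 id = 1" "RLmin 1 id = 1"
    unfolding peaks_def des_def LRmin_def RLmin_def by simp_all
  then show ?case by (simp add: wL_def wR_def id_def)
next
  case (Suc n)
  show ?case
  proof (intro allI)
    fix x y a b :: 'a
    define S where "S = {\<sigma>::nat\<Rightarrow>nat. \<sigma> permutes {1..n}}"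
    have "(\<Sum>\<tau>\<in>{\<tau>. \<tau> permutes {1..Suc n}}. wL (Suc n) x y a b \<tau>) =
        (\<Sum>\<sigma>\<in>S. (a+b)*((x+y)/2) * wL n x y a b \<sigma> + x*y * DL n x y a b \<sigma>)"
      unfolding sum_ins S_def
    proof (rule sum.cong[OF refl])
      fix \<sigma> assume "\<sigma> \<in> {\<sigma>::nat\<Rightarrow>nat. \<sigma> permutes {1..n}}"
      then show "(\<Sum>j\<in>{0..n}. wL (Suc n) x y a b (ins n \<sigma> j)) = (a+b)*((x+y)/2) * wL n x y a b \<sigma> + x*y * DL n x y a b \<sigma>"
        using sumL[of \<sigma> n x y a b] Suc.hyps by blast
    qed
    also have "\<dots> = (a+b)*((x+y)/2) * (\<Sum>\<sigma>\<in>S. wL n x y a b \<sigma>) + x*y * (\<Sum>\<sigma>\<in>S. DL n x y a b \<sigma>)"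
      by (simp add: sum.distrib sum_distrib_left)
    also have "\<dots> = ((a+b)/2)*(x+y) * (\<Sum>\<sigma>\<in>S. wR n x y a b \<sigma>) + x*y * (\<Sum>\<sigma>\<in>S. DR n x y a b \<sigma>)"
      using Suc.IH deriv_eq[of n a b x y] unfolding S_def by (simp add: field_simps)
    also have "\<dots> = (\<Sum>\<sigma>\<in>S. ((a+b)/2)*(x+y) * wR n x y a b \<sigma> + x*y * DR n x y a b \<sigma>)"
      by (simp add: sum.distrib sum_distrib_left)
    also have "\<dots> = (\<Sum>\<tau>\<in>{\<tau>. \<tau> permutes {1..Suc n}}. wR (Suc n) x y a b \<tau>)"
      unfolding sum_ins S_def
    proof (rule sum.cong[OF refl])
      fix \<sigma> assume "\<sigma> \<in> {\<sigma>::nat\<Rightarrow>nat. \<sigma> permutes {1..n}}"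
      then show "((a+b)/2)*(x+y) * wR n x y a b \<sigma> + x*y * DR n x y a b \<sigma> = (\<Sum>j\<in>{0..n}. wR (Suc n) x y a b (ins n \<sigma> j))"
        using sumR[of \<sigma> n x y a b] Suc.hyps by simp
    qed
    finally show "(\<Sum>\<tau>\<in>{\<tau>. \<tau> permutes {1..Suc n}}. wL (Suc n) x y a b \<tau>) = (\<Sum>\<tau>\<in>{\<tau>. \<tau> permutes {1..Suc n}}. wR (Suc n) x y a b \<tau>)" .
  qed
qed

theorem theorem1p9:
  fixes x y \<alpha> \<beta> :: "'a :: field_char_0" and n :: nat
  assumes "n \<ge> 1"
  shows "(\<Sum>\<sigma> \<in> {\<sigma>. \<sigma> permutes {1..n}}.
            (x*y) ^ peaks n \<sigma> * ((x+y)/2) ^ (n - 2 * peaks n \<sigma> - 1)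
            * \<alpha> ^ (LRmin n \<sigma> - 1) * \<beta> ^ (RLmin n \<sigma> - 1))
       = (\<Sum>\<sigma> \<in> {\<sigma>. \<sigma> permutes {1..n}}.
            x ^ des n \<sigma> * y ^ (n - des n \<sigma> - 1)
            * ((\<alpha>+\<beta>)/2) ^ (LRmin n \<sigma> + RLmin n \<sigma> - 2))"
  using main[OF assms] unfolding wL_def wR_def by blast

end
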